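(* Let $a,b,c,k,m>0$ and consider the system $$\frac{dx}{dt}=bx(1-x-cy),\qquad \frac{dy}{dt}=y\Big(\frac{1}{1+kx}-y-ax-mxy\Big)$$ with $x(0)>0$, $y(0)>0$. Then the solutions are bounded; in fact $\limsup_{t\to+\infty}x(t)\le 1$ and $\limsup_{t\to+\infty}y(t)\le 1$.
   Context: All parameters $a,b,c,k,m$ are positive constants. *)

theory Defs
  imports "HOL-Analysis.Analysis"
begin

end

theory Submission imports Defs "HOL-Analysis.Analysis" begin
lemma cont0:
  fixes f f' :: "real \<Rightarrow> real"
  assumes d: "\<And>u. u \<ge> 0 \<Longrightarrow> (f has_real_derivative f' u) (at u within {0..})"
  shows "continuous_on {0..} f"
  using d by (meson DERIV_continuous atLeast_iff continuous_on_eq_continuous_within)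

lemma mvt0:
  fixes f f' :: "real \<Rightarrow> real"
  assumes "0 \<le> s" "s < t" and d: "\<And>u. u \<ge> 0 \<Longrightarrow> (f has_real_derivative f' u) (at u within {0..})"
  shows "\<exists>\<xi>. s < \<xi> \<and> \<xi> < t \<and> f t - f s = (t - s) * f' \<xi>"
proof -
  have c: "continuous_on {0..} f" using cont0[OF d] .
  have "continuous_on {s..t} f" by (rule continuous_on_subset[OF c]) (use assms in auto)
  moreover have "(f has_derivative (*) (f' u)) (at u)" if "s < u" "u < t" for u
  proof -
    have "at u within {0..} = at u" using that assms(1)
      by (intro at_within_interior) auto
    then show ?thesis using d[of u] that assms(1) by (auto simp: has_field_derivative_def)
  qed
  ultimately obtain \<xi> where "s < \<xi>" "\<xi> < t" "f t - f s = f' \<xi> * (t - s)"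
    using mvt[OF assms(2), of f "\<lambda>u. (*) (f' u)"] by auto
  then show ?thesis by (metis mult.commute)
qed

lemma trap_inv:
  fixes f f' :: "real \<Rightarrow> real"
  assumes d: "\<And>u. u \<ge> 0 \<Longrightarrow> (f has_real_derivative f' u) (at u within {0..})"
    and H: "\<And>u. u \<ge> 0 \<Longrightarrow> f u > L \<Longrightarrow> f' u \<le> 0"
    and st: "0 \<le> s" "s \<le> t" and fs: "f s \<le> L"
  shows "f t \<le> L"
proof (rule ccontr)
  assume ft: "\<not> f t \<le> L"
  define A where "A = {s..t} \<inter> f -` {..L}"
  have c: "continuous_on {s..t} f" by (rule continuous_on_subset[OF cont0[OF d]]) (use st in auto)
  have clA: "closed A" unfolding A_def by (rule continuous_closed_preimage[OF c]) auto
  have "s \<in> A" using st fs by (auto simp: A_def)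
  moreover have bA: "bdd_above A" unfolding A_def by (rule bdd_aboveI[of _ t]) auto
  ultimately have t1A: "Sup A \<in> A" using clA closed_contains_Sup by blast
  have t1s: "s \<le> Sup A" using \<open>s \<in> A\<close> bA by (rule cSup_upper)
  have t1t: "Sup A < t" using t1A ft by (auto simp: A_def order.order_iff_strict)
  obtain \<xi> where xi: "Sup A < \<xi>" "\<xi> < t" "f t - f (Sup A) = (t - Sup A) * f' \<xi>"
    using mvt0[OF _ t1t d] st t1s by auto
  have "\<xi> \<notin> A" using xi(1) bA by (meson cSup_upper not_le)
  then have "f \<xi> > L" using xi t1s by (auto simp: A_def)
  then have "f' \<xi> \<le> 0" using H xi t1s st by auto
  then have "f t \<le> f (Sup A)" using xi t1t by (smt (verit) mult_nonneg_nonpos)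
  then show False using t1A ft by (auto simp: A_def)
qed

lemma trap:
  fixes f f' :: "real \<Rightarrow> real"
  assumes d: "\<And>u. u \<ge> 0 \<Longrightarrow> (f has_real_derivative f' u) (at u within {0..})"
    and H: "\<And>u. u \<ge> 0 \<Longrightarrow> f u > L \<Longrightarrow> f' u \<le> - \<delta>" and dl: "\<delta> \<ge> 0"
    and t: "0 \<le> t"
  shows "f t \<le> L \<or> f t \<le> f 0 - \<delta> * t"
proof (cases "\<exists>u. 0 \<le> u \<and> u \<le> t \<and> f u \<le> L")
  case True
  then obtain u where "0 \<le> u" "u \<le> t" "f u \<le> L" by blast
  then have "f t \<le> L" using trap_inv[OF d, of L u t] H dl by force
  then show ?thesis by simp
next
  case False
  show ?thesis
  proof (cases "t = 0")
    case True then show ?thesis by simp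
  next
    case False
    with t have "0 < t" by simp
    then obtain \<xi> where xi: "0 < \<xi>" "\<xi> < t" "f t - f 0 = (t - 0) * f' \<xi>"
      using mvt0[OF _ _ d, of 0 t] by auto
    have "f \<xi> > L" using xi \<open>\<not> (\<exists>u. 0 \<le> u \<and> u \<le> t \<and> f u \<le> L)\<close> by (meson less_imp_le not_le)
    then have "f' \<xi> \<le> - \<delta>" using H[of \<xi>] xi by simp
    then have "t * f' \<xi> \<le> t * (-\<delta>)" using t by (rule mult_left_mono)
    then show ?thesis using xi by (simp add: algebra_simps)
  qed
qed

lemma positivity:
  fixes f g :: "real \<Rightarrow> real"
  assumes d: "\<And>u. u \<ge> 0 \<Longrightarrow> (f has_real_derivative (f u * g u)) (at u within {0..})"
    and cg: "continuous_on {0..} g" and f0: "f 0 > 0" and t: "t \<ge> 0"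
  shows "f t > 0"
proof (rule ccontr)
  assume ft: "\<not> f t > 0"
  define A where "A = {0..t} \<inter> f -` {..0}"
  have c: "continuous_on {0..t} f" by (rule continuous_on_subset[OF cont0[OF d]]) auto
  have clA: "closed A" unfolding A_def by (rule continuous_closed_preimage[OF c]) auto
  have "t \<in> A" using t ft by (auto simp: A_def)
  moreover have bA: "bdd_below A" unfolding A_def by (rule bdd_belowI[of _ 0]) auto
  ultimately have t0A: "Inf A \<in> A" using clA closed_contains_Inf by blast
  define t0 where "t0 = Inf A"
  have t0pos: "0 < t0" using t0A f0 by (auto simp: A_def t0_def order.order_iff_strict)
  have fpos: "f u > 0" if "0 \<le> u" "u < t0" for u
  proof (rule ccontr)
    assume "\<not> f u > 0"
    then have "u \<in> A" using that t0A by (auto simp: A_def t0_def)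
    then have "t0 \<le> u" unfolding t0_def using bA by (rule cInf_lower)
    then show False using that by simp
  qed
  have "compact (g ` {0..t0})"
    by (rule compact_continuous_image[OF continuous_on_subset[OF cg]]) auto
  then obtain M where M: "\<And>u. u \<in> {0..t0} \<Longrightarrow> \<bar>g u\<bar> \<le> M"
    using compact_imp_bounded bounded_real by (metis image_eqI)
  define h where "h u = f u * exp (M * u)" for u
  have dh: "(h has_real_derivative (f u * g u * exp (M * u) + f u * (exp (M * u) * M))) (at u within {0..})"
    if "u \<ge> 0" for u
    unfolding h_def
    by (rule derivative_eq_intros d[OF that] refl | simp)+
  obtain \<xi> where xi: "0 < \<xi>" "\<xi> < t0" "h t0 - h 0 = (t0 - 0) * (f \<xi> * g \<xi> * exp (M * \<xi>) + f \<xi> * (exp (M * \<xi>) * M))"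
    using mvt0[OF _ t0pos dh] by auto
  have "g \<xi> + M \<ge> 0" using M[of \<xi>] xi by auto
  then have "f \<xi> * g \<xi> * exp (M * \<xi>) + f \<xi> * (exp (M * \<xi>) * M) \<ge> 0"
    using fpos[of \<xi>] xi
    by (metis (no_types, lifting) distrib_left exp_gt_zero less_eq_real_def mult.commute mult_nonneg_nonneg mult.assoc)
  then have "h t0 \<ge> h 0" using xi t0pos by (smt (verit) mult_nonneg_nonneg)
  then have "f t0 * exp (M * t0) > 0" using f0 by (simp add: h_def)
  then have "f t0 > 0" by (simp add: zero_less_mult_iff)
  then show False using t0A by (auto simp: A_def t0_def)
qed
lemma final:
  fixes f f' :: "real \<Rightarrow> real"
  assumes d: "\<And>u. u \<ge> 0 \<Longrightarrow> (f has_real_derivative f' u) (at u within {0..})"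
    and pos: "\<And>u. u \<ge> 0 \<Longrightarrow> f u > 0" and C: "C > 0"
    and H: "\<And>e u. e \<ge> 0 \<Longrightarrow> u \<ge> 0 \<Longrightarrow> f u > 1 + e \<Longrightarrow> f' u \<le> - (C * e)"
  shows "bounded (f ` {0..}) \<and> Limsup at_top (\<lambda>t. ereal (f t)) \<le> 1"
proof
  have "\<bar>f t\<bar> \<le> max (f 0) 1" if "t \<ge> 0" for t
    using trap[OF d, of 1 0 t] H[of 0] that pos[OF that] by auto
  then show "bounded (f ` {0..})" unfolding bounded_real by auto
next
  show "Limsup at_top (\<lambda>t. ereal (f t)) \<le> 1"
  proof (rule ereal_le_epsilon2)
    fix e :: real assume e: "0 < e"
    have "eventually (\<lambda>t. ereal (f t) \<le> ereal (1 + e)) at_top"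
      unfolding eventually_at_top_linorder
    proof (intro exI allI impI)
      fix t assume t: "t \<ge> max 0 (f 0 / (C * e))"
      then have t0: "t \<ge> 0" by simp
      have "f 0 / (C * e) \<le> t" using t by simp
      then have "f 0 \<le> C * e * t" using C e by (simp add: divide_le_eq mult.commute)
      then have "f 0 - C * e * t \<le> 0" by simp
      then show "ereal (f t) \<le> ereal (1 + e)"
        using trap[OF d, of "1 + e" "C * e" t] H[of e] t0 pos[OF t0] C e by auto
    qed
    then have "Limsup at_top (\<lambda>t. ereal (f t)) \<le> ereal (1 + e)" by (rule Limsup_bounded)
    then show "Limsup at_top (\<lambda>t. ereal (f t)) \<le> 1 + ereal e" by (simp add: add.commute)
  qed
qed
theorem theorem2:
  fixes a b c k m :: real and x y :: "real \<Rightarrow> real"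
  assumes "a > 0" and "b > 0" and "c > 0" and "k > 0" and "m > 0"
    and "x 0 > 0" and "y 0 > 0"
    and dx: "\<And>t. t \<ge> 0 \<Longrightarrow>
      (x has_real_derivative (b * x t * (1 - x t - c * y t))) (at t within {0..})"
    and dy: "\<And>t. t \<ge> 0 \<Longrightarrow>
      (y has_real_derivative (y t * (1 / (1 + k * x t) - y t - a * x t - m * x t * y t)))
        (at t within {0..})"
  shows "bounded (x ` {0..}) \<and> bounded (y ` {0..})
    \<and> Limsup at_top (\<lambda>t. ereal (x t)) \<le> 1 \<and> Limsup at_top (\<lambda>t. ereal (y t)) \<le> 1"
proof -
  have cx: "continuous_on {0..} x" by (rule cont0[OF dx])
  have cy: "continuous_on {0..} y" by (rule cont0[OF dy])
  have xpos: "x t > 0" if "t \<ge> 0" for t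
  proof (rule positivity[of x "\<lambda>u. b * (1 - x u - c * y u)"])
    show "(x has_real_derivative x u * (b * (1 - x u - c * y u))) (at u within {0..})" if "u \<ge> 0" for u
      using dx[OF that] by (simp add: mult.assoc mult.left_commute)
    show "continuous_on {0..} (\<lambda>u. b * (1 - x u - c * y u))"
      using cx cy by (intro continuous_intros)
  qed (use assms that in auto)
  have ypos: "y t > 0" if "t \<ge> 0" for t
  proof (rule positivity[of y "\<lambda>u. 1 / (1 + k * x u) - y u - a * x u - m * x u * y u"])
    show "(y has_real_derivative y u * (1 / (1 + k * x u) - y u - a * x u - m * x u * y u)) (at u within {0..})" if "u \<ge> 0" for u
      using dy[OF that] by simp
    have "\<forall>u\<in>{0..}. 1 + k * x u \<noteq> 0" using xpos assms by (smt (verit) atLeast_iff mult_pos_pos)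
    then show "continuous_on {0..} (\<lambda>u. 1 / (1 + k * x u) - y u - a * x u - m * x u * y u)"
      using cx cy by (intro continuous_intros) auto
  qed (use assms that in auto)
  have X: "bounded (x ` {0..}) \<and> Limsup at_top (\<lambda>t. ereal (x t)) \<le> 1"
  proof (rule final[OF dx xpos \<open>b > 0\<close>])
    fix e u :: real assume e: "e \<ge> 0" and u: "u \<ge> 0" and xu: "x u > 1 + e"
    have yu: "y u > 0" using ypos u .
    have h1: "e \<le> -(1 - x u - c * y u)" using xu yu assms by (smt (verit) mult_pos_pos)
    have h2: "b \<le> b * x u" using xu assms e by simp
    have "b * e \<le> b * x u * (-(1 - x u - c * y u))"
      by (rule mult_mono[OF h2 h1]) (use assms xu e in auto)
    moreover have "b * x u * (-(1 - x u - c * y u)) = - (b * x u * (1 - x u - c * y u))" by (rule mult_minus_right)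
    ultimately show "b * x u * (1 - x u - c * y u) \<le> - (b * e)" by linarith
  qed simp
  have Y: "bounded (y ` {0..}) \<and> Limsup at_top (\<lambda>t. ereal (y t)) \<le> 1"
  proof (rule final[OF dy ypos zero_less_one])
    fix e u :: real assume e: "e \<ge> 0" and u: "u \<ge> 0" and yu: "y u > 1 + e"
    have xu: "x u > 0" using xpos u .
    have q: "1 / (1 + k * x u) \<le> 1" using xu assms by (simp add: divide_le_eq)
    have r: "a * x u + m * x u * y u \<ge> 0" using xu yu assms e by simp
    have h1: "e \<le> -(1 / (1 + k * x u) - y u - a * x u - m * x u * y u)" using q r yu by linarith
    have h2: "1 \<le> y u" using yu e by simp
    have "1 * e \<le> y u * (-(1 / (1 + k * x u) - y u - a * x u - m * x u * y u))"
      by (rule mult_mono[OF h2 h1]) (use yu e in auto)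
    moreover have "y u * (-(1 / (1 + k * x u) - y u - a * x u - m * x u * y u)) = - (y u * (1 / (1 + k * x u) - y u - a * x u - m * x u * y u))" by (rule mult_minus_right)
    ultimately show "y u * (1 / (1 + k * x u) - y u - a * x u - m * x u * y u) \<le> - (1 * e)" by linarith
  qed simp
  show ?thesis using X Y by blast
qed
end
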